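(* Assume $N\ge 2$ and $2\beta T>1$. Run the Exponentially Weighted Forecaster (EWF) policy with parameters \[ \gamma=\frac{1}{2\beta T},\qquad \eta=\sqrt{\frac{\log N}{4\beta^2T\log\left(2\beta TN^3+N+2\right)}}. \] Then for every demand sequence $d_1,\dots,d_T\in\mathcal D$, \[ \mathbb E[\mathcal R(T)]\le 4\beta\sqrt{T\log N\log\left(2\beta TN^3+N+2\right)}+2\beta\sqrt{T\log N}+1 . \]
   Context: Fix integers $T\ge1$, $D\ge 1$ and reals $h,b>0$. Let $\mathcal T=\{1,\dots,T\}$, $\mathcal D=\{0,1,\dots,D\}$, let $\mathcal I\subseteq\mathcal D$ with $|\mathcal I|=N$, let $\beta=D\max\{h,b\}$, and let $c(i,d)=h(i-d)^+ + b(d-i)^+$. Logarithms are natural. For $d\in\mathcal D$, $e_d\in\mathbb R^{D+1}$ is the standard basis vector (coordinates indexed by $\{0,\dots,D\}$) with a $1$ in coordinate $d$. For $i\in\mathcal D$, the signal matrix $\mathbb S_i$ is the $(i+1)\times(D+1)$ $0/1$ matrix with rows indexed by $k\in\{1,\dots,i+1\}$ and columns by $d\in\{0,\dots,D\}$, with $\mathbb S_i(k,d)=1$ iff $\min\{i,d\}=k-1$; and $v_i\in\mathbb R^{i+1}$ is defined by $v_i(k)=hi-(h+b)(k-1)$, $k=1,\dots,i+1$. A demand sequence $d_1,\dots,d_T\in\mathcal D$ is fixed arbitrarily in advance (it does not depend on the policy's decisions). EWF policy with parameters $\eta>0$, $\gamma\in(0,1)$: set $W_i(0)=1$ for all $i\in\mathcal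 I$. For $t=1,\dots,T$: let $W(t-1)=\sum_{i\in\mathcal I}W_i(t-1)$ and $p_i(t)=(1-\gamma)\frac{W_i(t-1)}{W(t-1)}+\frac{\gamma}{N}$; draw $I_t\in\mathcal I$ with $\mathbb P(I_t=i\mid I_1,\dots,I_{t-1})=p_i(t)$; observe the sales $\min\{I_t,d_t\}$; for each $i\in\mathcal I$ compute $\tilde c(i,d_t)=\frac{\mathbb 1\{I_t\ge i\}}{\mathbb P_t(I_t\ge i)}\left(v_i^T\mathbb S_ie_{d_t}+\beta\right)$ with $\mathbb P_t(I_t\ge i)=\sum_{j\in\mathcal I,\,j\ge i}p_j(t)$; and set $W_i(t)=W_i(t-1)e^{-\eta\tilde c(i,d_t)}$. The regret is $\mathcal R(T)=\sum_{t\in\mathcal T}c(I_t,d_t)-\min_{i\in\mathcal I}\sum_{t\in\mathcal T}c(i,d_t)$, and the expectation is over the policy's randomization. *)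

theory Defs
  imports Complex_Main
begin

definition nv_cost :: "real \<Rightarrow> real \<Rightarrow> nat \<Rightarrow> nat \<Rightarrow> real" where
  "nv_cost h b i d = h * max (real i - real d) 0 + b * max (real d - real i) 0"

definition ewf_beta :: "nat \<Rightarrow> real \<Rightarrow> real \<Rightarrow> real" where
  "ewf_beta D h b = real D * max h b"

(* Signal matrix S_i: entry (k,d), k \<in> {1..i+1}, d \<in> {0..D}; equals 1 iff min i d = k-1 *)
definition signal_mat :: "nat \<Rightarrow> nat \<Rightarrow> nat \<Rightarrow> real" where
  "signal_mat i k d = (if min i d = k - 1 then 1 else 0)"

definition signal_vec :: "real \<Rightarrow> real \<Rightarrow> nat \<Rightarrow> nat \<Rightarrow> real" where
  "signal_vec h b i k = h * real i - (h + b) * (real k - 1)"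

definition signal_term :: "real \<Rightarrow> real \<Rightarrow> nat \<Rightarrow> nat \<Rightarrow> real" where
  "signal_term h b i d = (\<Sum>k\<in>{1..i+1}. signal_vec h b i k * signal_mat i k d)"

definition ewf_prob :: "nat set \<Rightarrow> real \<Rightarrow> (nat \<Rightarrow> real) \<Rightarrow> nat \<Rightarrow> real" where
  "ewf_prob I \<gamma> W j = (1 - \<gamma>) * W j / (\<Sum>k\<in>I. W k) + \<gamma> / real (card I)"

(* Weights W(t) after the history hs = [I_t, ..., I_1] (most recent first);
   t = length hs.  W(0) = 1. *)
primrec ewf_W :: "nat set \<Rightarrow> nat \<Rightarrow> real \<Rightarrow> real \<Rightarrow> real \<Rightarrow> real \<Rightarrow> (nat \<Rightarrow> nat)
    \<Rightarrow> nat list \<Rightarrow> nat \<Rightarrow> real" where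
  "ewf_W I D h b \<eta> \<gamma> d [] = (\<lambda>i. 1)"
| "ewf_W I D h b \<eta> \<gamma> d (x # hs) =
    (let W = ewf_W I D h b \<eta> \<gamma> d hs;
         p = ewf_prob I \<gamma> W;
         t = Suc (length hs);
         Pge = (\<lambda>i. \<Sum>j\<in>{j\<in>I. i \<le> j}. p j);
         ct = (\<lambda>i. (if i \<le> x then 1 else 0) / Pge i
                     * (signal_term h b i (d t) + ewf_beta D h b))
     in (\<lambda>i. W i * exp (- \<eta> * ct i)))"

primrec ewf_path_prob :: "nat set \<Rightarrow> nat \<Rightarrow> real \<Rightarrow> real \<Rightarrow> real \<Rightarrow> real \<Rightarrow> (nat \<Rightarrow> nat)
    \<Rightarrow> nat list \<Rightarrow> real" where
  "ewf_path_prob I D h b \<eta> \<gamma> d [] = 1"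
| "ewf_path_prob I D h b \<eta> \<gamma> d (x # hs) =
    ewf_path_prob I D h b \<eta> \<gamma> d hs * ewf_prob I \<gamma> (ewf_W I D h b \<eta> \<gamma> d hs) x"

(* Regret of a chronological decision sequence xs = [I_1, ..., I_T] *)
definition regret :: "nat set \<Rightarrow> real \<Rightarrow> real \<Rightarrow> (nat \<Rightarrow> nat) \<Rightarrow> nat \<Rightarrow> nat list \<Rightarrow> real" where
  "regret I h b d T xs =
     (\<Sum>t\<in>{1..T}. nv_cost h b (xs ! (t - 1)) (d t))
     - Min ((\<lambda>i. \<Sum>t\<in>{1..T}. nv_cost h b i (d t)) ` I)"

definition ewf_expected_regret :: "nat set \<Rightarrow> nat \<Rightarrow> real \<Rightarrow> real \<Rightarrow> real \<Rightarrow> real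
    \<Rightarrow> (nat \<Rightarrow> nat) \<Rightarrow> nat \<Rightarrow> real" where
  "ewf_expected_regret I D h b \<eta> \<gamma> d T =
     (\<Sum>hs\<in>{hs. set hs \<subseteq> I \<and> length hs = T}.
        ewf_path_prob I D h b \<eta> \<gamma> d hs * regret I h b d T (rev hs))"

end

theory Submission imports Defs begin

lemma exp_neg_quad:
  fixes x :: real assumes "x \<ge> 0"
  shows "exp (- x) \<le> 1 - x + x^2/2"
proof -
  let ?f = "\<lambda>x::real. 1 - x + x^2/2 - exp (-x)"
  have "?f 0 \<le> ?f x"
  proof (rule DERIV_nonneg_imp_nondecreasing[OF assms])
    fix y :: real assume "0 \<le> y" "y \<le> x"
    have "DERIV ?f y :> (-1 + y + exp (-y))"
      by (auto intro!: derivative_eq_intros)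
    moreover have "-1 + y + exp (-y) \<ge> 0" using exp_ge_add_one_self[of "-y"] by linarith
    ultimately show "\<exists>z. DERIV ?f y :> z \<and> z \<ge> 0" by blast
  qed
  then show ?thesis by simp
qed

lemma tail_sum_bound:
  fixes p :: "nat \<Rightarrow> real"
  assumes "finite S"
  shows "S \<noteq> {} \<longrightarrow> (\<forall>i\<in>S. p i > 0) \<longrightarrow>
    (\<Sum>i\<in>S. p i / (\<Sum>j\<in>{j\<in>S. i \<le> j}. p j)) \<le> 1 + ln ((\<Sum>j\<in>S. p j) / p (Max S))"
  using assms
proof (induction S rule: finite_linorder_min_induct)
  case empty
  then show ?case by simp
next
  case (insert m A)
  show ?case
  proof (intro impI)
    assume pos: "\<forall>i\<in>insert m A. 0 < p i"
    have mA: "m \<notin> A" using insert.hyps by auto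
    show "(\<Sum>i\<in>insert m A. p i / (\<Sum>j\<in>{j\<in>insert m A. i \<le> j}. p j))
        \<le> 1 + ln ((\<Sum>j\<in>insert m A. p j) / p (Max (insert m A)))"
    proof (cases "A = {}")
      case True
      have "{j\<in>insert m A. m \<le> j} = {m}" using True by auto
      then show ?thesis using True pos by simp
    next
      case False
      have IH: "(\<Sum>i\<in>A. p i / (\<Sum>j\<in>{j\<in>A. i \<le> j}. p j)) \<le> 1 + ln ((\<Sum>j\<in>A. p j) / p (Max A))"
        using insert.IH False pos by auto
      have tails: "\<And>i. i \<in> A \<Longrightarrow> {j\<in>insert m A. i \<le> j} = {j\<in>A. i \<le> j}"
        using insert.hyps by auto
      have tm: "{j\<in>insert m A. m \<le> j} = insert m A"
        using insert.hyps by auto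
      have mx: "Max (insert m A) = Max A"
        using insert.hyps False by (metis Max_in Max_insert max.absorb2 less_imp_le)
      define P' where "P' = (\<Sum>j\<in>A. p j)"
      have P'pos: "P' > 0" unfolding P'_def using pos False insert.hyps
        by (intro sum_pos) auto
      have pm: "p m > 0" using pos by auto
      have Pins: "(\<Sum>j\<in>insert m A. p j) = p m + P'"
        unfolding P'_def using insert.hyps mA by simp
      have key: "p m / (p m + P') \<le> ln ((p m + P') / P')"
      proof -
        have "ln (P' / (p m + P')) \<le> P' / (p m + P') - 1"
          using P'pos pm by (intro ln_le_minus_one) auto
        moreover have "ln (P' / (p m + P')) = - ln ((p m + P') / P')"
          using P'pos pm by (simp add: ln_div)
        moreover have "P' / (p m + P') - 1 = - (p m / (p m + P'))"
          using P'pos pm by (simp add: field_simps)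
        ultimately show ?thesis by linarith
      qed
      have "(\<Sum>i\<in>insert m A. p i / (\<Sum>j\<in>{j\<in>insert m A. i \<le> j}. p j))
          = p m / (p m + P') + (\<Sum>i\<in>A. p i / (\<Sum>j\<in>{j\<in>A. i \<le> j}. p j))"
        using insert.hyps mA tails tm Pins by (simp add: sum.insert)
      also have "\<dots> \<le> ln ((p m + P') / P') + 1 + ln (P' / p (Max A))"
        using key IH unfolding P'_def by linarith
      also have "\<dots> = 1 + ln ((p m + P') / p (Max A))"
      proof -
        have "p (Max A) > 0" using pos False insert.hyps Max_in by auto
        then show ?thesis using P'pos pm by (simp add: ln_div)
      qed
      finally show ?thesis using Pins mx by simp
    qed
  qed
qed



primrec rsum :: "(nat \<Rightarrow> nat list \<Rightarrow> real) \<Rightarrow> nat list \<Rightarrow> real" where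
  "rsum f [] = 0"
| "rsum f (x # hs) = rsum f hs + f x hs"

lemma signal_term_eq: "signal_term h b i d = nv_cost h b i d - b * real d"
proof -
  have "signal_term h b i d = (\<Sum>k\<in>{1..i+1}. if k = min i d + 1 then signal_vec h b i k else 0)"
    unfolding signal_term_def signal_mat_def
    by (intro sum.cong) auto
  also have "\<dots> = signal_vec h b i (min i d + 1)" by simp
  also have "\<dots> = nv_cost h b i d - b * real d"
    unfolding signal_vec_def nv_cost_def
    by (cases "i \<le> d") (auto simp: min_def algebra_simps)
  finally show ?thesis .
qed

locale ewfl =
  fixes I :: "nat set" and D :: nat and h b \<eta> \<gamma> :: real and d :: "nat \<Rightarrow> nat" and T :: nat
  assumes finI: "finite I" and cardI: "card I \<ge> 2" and Isub: "I \<subseteq> {0..D}"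
    and hpos: "h > 0" and bpos: "b > 0" and etapos: "\<eta> > 0" and gpos: "\<gamma> > 0" and glt1: "\<gamma> < 1"
    and dle: "\<forall>t\<in>{1..T}. d t \<le> D"
begin

abbreviation "\<beta> \<equiv> ewf_beta D h b"
abbreviation W where "W \<equiv> ewf_W I D h b \<eta> \<gamma> d"
abbreviation p where "p hs \<equiv> ewf_prob I \<gamma> (W hs)"
abbreviation pp where "pp \<equiv> ewf_path_prob I D h b \<eta> \<gamma> d"
definition Ws where "Ws hs = (\<Sum>i\<in>I. W hs i)"
definition qq where "qq hs i = W hs i / Ws hs"
definition Pge where "Pge hs i = (\<Sum>j\<in>{j\<in>I. i \<le> j}. p hs j)"
definition ll where "ll i t = signal_term h b i (d t) + ewf_beta D h b"
definition ct where "ct hs x i = (if i \<le> x then 1 else 0) / Pge hs i * ll i (Suc (length hs))"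
definition HH where "HH n = {hs. set hs \<subseteq> I \<and> length hs = n}"
definition EE where "EE n g = (\<Sum>hs\<in>HH n. pp hs * g hs)"

lemma W_Cons: "W (x # hs) = (\<lambda>i. W hs i * exp (- \<eta> * ct hs x i))"
  by (simp add: Let_def ct_def Pge_def ll_def)

declare ewf_W.simps(2)[simp del]

lemma W_pos: "W hs i > 0"
  by (induction hs arbitrary: i) (auto simp: W_Cons)

lemma Ipos: "card I > 0" "I \<noteq> {}" using cardI finI by auto

lemma Ws_pos: "Ws hs > 0"
  unfolding Ws_def using finI Ipos W_pos by (intro sum_pos) auto

lemma p_eq: "p hs j = (1 - \<gamma>) * qq hs j + \<gamma> / card I"
  unfolding ewf_prob_def qq_def Ws_def by simp

lemma qq_nonneg: "qq hs j \<ge> 0" using W_pos Ws_pos unfolding qq_def by (simp add: less_imp_le)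

lemma sum_qq: "(\<Sum>j\<in>I. qq hs j) = 1"
proof -
  have "Ws hs \<noteq> 0" using Ws_pos[of hs] by simp
  then show ?thesis unfolding qq_def by (simp add: sum_divide_distrib[symmetric] Ws_def)
qed

lemma p_ge: "p hs j \<ge> \<gamma> / card I"
  using p_eq qq_nonneg glt1 by (simp add: mult_nonneg_nonneg)

lemma p_pos: "p hs j > 0"
proof -
  have "\<gamma> / card I > 0" using gpos Ipos by simp
  then show ?thesis using p_ge[of hs j] by linarith
qed

lemma sum_p: "(\<Sum>j\<in>I. p hs j) = 1"
  using Ipos by (simp add: p_eq sum.distrib sum_distrib_left[symmetric] sum_qq)

lemma pp_nonneg: "pp hs \<ge> 0"
  by (induction hs) (auto intro!: mult_nonneg_nonneg less_imp_le[OF p_pos])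

lemma Pge_pos: "i \<in> I \<Longrightarrow> Pge hs i > 0"
  unfolding Pge_def using finI p_pos by (intro sum_pos) auto

lemma ll_eq: "ll i t = nv_cost h b i (d t) + (\<beta> - b * d t)"
  unfolding ll_def signal_term_eq by simp

lemma beta_pos: "\<beta> > 0"
proof -
  have "D \<ge> 1" using cardI Isub
    by (metis One_nat_def atLeast0AtMost card_atMost card_mono finite_atMost le_add1
        le_antisym not_less_eq_eq numeral_2_eq_2 order_trans plus_1_eq_Suc)
  then show ?thesis unfolding ewf_beta_def using hpos bpos by simp
qed

lemma nv_bounds: assumes "i \<le> D" "dd \<le> D"
  shows "nv_cost h b i dd \<ge> 0" "nv_cost h b i dd \<le> \<beta>"
proof -
  show "nv_cost h b i dd \<ge> 0" unfolding nv_cost_def using hpos bpos by simp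
  have a1: "max (real i - real dd) 0 \<le> D" "max (real dd - real i) 0 \<le> D" using assms by auto
  have a2: "max (real i - real dd) 0 = 0 \<or> max (real dd - real i) 0 = 0" by auto
  have "h * max (real i - real dd) 0 \<le> max h b * D"
    using a1 hpos by (intro mult_mono) auto
  moreover have "b * max (real dd - real i) 0 \<le> max h b * D"
    using a1 bpos by (intro mult_mono) auto
  ultimately show "nv_cost h b i dd \<le> \<beta>" unfolding nv_cost_def ewf_beta_def
    using a2 by (auto simp: mult.commute)
qed

lemma ll_bounds: assumes "i \<in> I" "t \<in> {1..T}"
  shows "ll i t \<ge> 0" "ll i t \<le> 2 * \<beta>"
proof -
  have i: "i \<le> D" using assms Isub by auto
  have dd: "d t \<le> D" using assms dle by auto
  have "b * d t \<le> \<beta>" unfolding ewf_beta_def using dd bpos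
    by (metis max.cobounded2 mult.commute mult_mono of_nat_0_le_iff of_nat_mono less_imp_le)
  moreover have "b * d t \<ge> 0" using bpos by simp
  ultimately show "ll i t \<ge> 0" "ll i t \<le> 2 * \<beta>" unfolding ll_eq using nv_bounds[OF i dd] by linarith+
qed

end

context ewfl begin

lemma finite_HH: "finite (HH n)"
  unfolding HH_def using finI by (rule finite_lists_length_eq)

lemma HH_Suc: "HH (Suc n) = (\<lambda>(x,hs). x # hs) ` (I \<times> HH n)"
  unfolding HH_def by (auto simp: length_Suc_conv image_iff)

lemma sum_HH_Suc: "(\<Sum>hs\<in>HH (Suc n). g hs) = (\<Sum>hs\<in>HH n. \<Sum>x\<in>I. g (x # hs))"
proof -
  have inj: "inj_on (\<lambda>(x,hs). x # hs) (I \<times> HH n)" by (auto simp: inj_on_def)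
  have "(\<Sum>hs\<in>HH (Suc n). g hs) = (\<Sum>(x,hs)\<in>I \<times> HH n. g (x # hs))"
    unfolding HH_Suc by (subst sum.reindex[OF inj]) (simp add: case_prod_beta')
  also have "\<dots> = (\<Sum>x\<in>I. \<Sum>hs\<in>HH n. g (x # hs))"
    by (rule sum.cartesian_product[symmetric])
  also have "\<dots> = (\<Sum>hs\<in>HH n. \<Sum>x\<in>I. g (x # hs))"
    by (rule sum.swap)
  finally show ?thesis .
qed

lemma EE_Suc: "EE (Suc n) g = EE n (\<lambda>hs. \<Sum>x\<in>I. p hs x * g (x # hs))"
  unfolding EE_def sum_HH_Suc
  by (simp add: sum_distrib_left mult.assoc)

lemma EE_const: "EE n (\<lambda>_. c) = c"
proof (induction n)
  case 0
  have "HH 0 = {[]}" unfolding HH_def by auto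
  then show ?case unfolding EE_def by simp
next
  case (Suc n)
  have "EE (Suc n) (\<lambda>_. c) = EE n (\<lambda>hs. (\<Sum>x\<in>I. p hs x) * c)"
    unfolding EE_Suc by (simp add: sum_distrib_right)
  then show ?case using Suc by (simp add: sum_p)
qed

lemma EE_mono: "(\<And>hs. hs \<in> HH n \<Longrightarrow> f hs \<le> g hs) \<Longrightarrow> EE n f \<le> EE n g"
  unfolding EE_def by (intro sum_mono mult_left_mono) (auto simp: pp_nonneg)

lemma EE_add: "EE n (\<lambda>hs. f hs + g hs) = EE n f + EE n g"
  unfolding EE_def by (simp add: distrib_left sum.distrib)

lemma EE_diff: "EE n (\<lambda>hs. f hs - g hs) = EE n f - EE n g"
  unfolding EE_def by (simp add: right_diff_distrib sum_subtractf)

lemma EE_cong: "(\<And>hs. hs \<in> HH n \<Longrightarrow> f hs = g hs) \<Longrightarrow> EE n f = EE n g"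
  unfolding EE_def by (intro sum.cong) auto

lemma EE_rsum: "EE n (rsum f) = (\<Sum>m<n. EE m (\<lambda>hs. \<Sum>x\<in>I. p hs x * f x hs))"
proof (induction n)
  case 0
  have "HH 0 = {[]}" unfolding HH_def by auto
  then show ?case unfolding EE_def by simp
next
  case (Suc n)
  have "EE (Suc n) (rsum f) = EE n (\<lambda>hs. \<Sum>x\<in>I. p hs x * (rsum f hs + f x hs))"
    unfolding EE_Suc by simp
  also have "\<dots> = EE n (\<lambda>hs. rsum f hs + (\<Sum>x\<in>I. p hs x * f x hs))"
    by (simp add: distrib_left sum.distrib sum_distrib_right[symmetric] sum_p)
  also have "\<dots> = EE n (rsum f) + EE n (\<lambda>hs. \<Sum>x\<in>I. p hs x * f x hs)"
    by (rule EE_add)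
  finally show ?case using Suc by simp
qed

end

context ewfl begin

definition FF where "FF i0 x hs = (\<Sum>i\<in>I. qq hs i * ct hs x i) - ct hs x i0
   - \<eta> / 2 * (\<Sum>i\<in>I. qq hs i * (ct hs x i)^2)"

lemma ct_nonneg: "i \<in> I \<Longrightarrow> length hs < T \<Longrightarrow> ct hs x i \<ge> 0"
  unfolding ct_def using Pge_pos[of i hs] ll_bounds(1)[of i "Suc (length hs)"]
  by (auto intro!: mult_nonneg_nonneg divide_nonneg_pos)

lemma Ws_Cons: "Ws (x # hs) = Ws hs * (\<Sum>i\<in>I. qq hs i * exp (- \<eta> * ct hs x i))"
proof -
  have "Ws hs \<noteq> 0" using Ws_pos[of hs] by simp
  then show ?thesis unfolding Ws_def qq_def W_Cons
    by (simp add: sum_distrib_left)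
qed

lemma step_ineq: assumes "length hs < T"
  shows "ln (Ws (x # hs)) - ln (Ws hs) \<le>
    - \<eta> * (\<Sum>i\<in>I. qq hs i * ct hs x i) + \<eta>^2 / 2 * (\<Sum>i\<in>I. qq hs i * (ct hs x i)^2)"
proof -
  define z where "z = (\<Sum>i\<in>I. qq hs i * exp (- \<eta> * ct hs x i))"
  have z: "Ws (x # hs) = Ws hs * z" unfolding z_def by (rule Ws_Cons)
  have zpos: "z > 0" using z Ws_pos[of hs] Ws_pos[of "x#hs"]
    by (metis zero_less_mult_pos)
  have "ln (Ws (x # hs)) - ln (Ws hs) = ln z"
    using z zpos Ws_pos[of hs] by (simp add: ln_mult)
  also have "\<dots> \<le> z - 1" using zpos by (rule ln_le_minus_one)
  also have "z \<le> (\<Sum>i\<in>I. qq hs i * (1 - \<eta> * ct hs x i + (\<eta> * ct hs x i)^2 / 2))"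
    unfolding z_def
  proof (intro sum_mono mult_left_mono qq_nonneg)
    fix i assume "i \<in> I"
    then have "\<eta> * ct hs x i \<ge> 0" using ct_nonneg[of i hs x] assms etapos by simp
    from exp_neg_quad[OF this] show "exp (- \<eta> * ct hs x i) \<le> 1 - \<eta> * ct hs x i + (\<eta> * ct hs x i)\<^sup>2 / 2"
      by simp
  qed
  also have "(\<Sum>i\<in>I. qq hs i * (1 - \<eta> * ct hs x i + (\<eta> * ct hs x i)^2 / 2))
     = 1 - \<eta> * (\<Sum>i\<in>I. qq hs i * ct hs x i) + \<eta>^2 / 2 * (\<Sum>i\<in>I. qq hs i * (ct hs x i)^2)"
    by (simp add: algebra_simps sum.distrib sum_subtractf sum_distrib_left sum_qq power_mult_distrib
        sum_divide_distrib[symmetric])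
  finally show ?thesis by simp
qed

lemma pathwise: "length hs \<le> T \<Longrightarrow> i0 \<in> I \<Longrightarrow>
   \<eta> * rsum (FF i0) hs \<le> ln (card I) - ln (Ws hs) + ln (W hs i0)"
proof (induction hs)
  case Nil
  then show ?case by (simp add: Ws_def)
next
  case (Cons x hs)
  have lt: "length hs < T" using Cons by simp
  have IH: "\<eta> * rsum (FF i0) hs \<le> ln (card I) - ln (Ws hs) + ln (W hs i0)"
    using Cons lt by simp
  have lnW: "ln (W (x # hs) i0) = ln (W hs i0) - \<eta> * ct hs x i0"
    using W_pos[of hs i0] by (simp add: W_Cons ln_mult)
  have "\<eta> * FF i0 x hs = \<eta> * (\<Sum>i\<in>I. qq hs i * ct hs x i) - \<eta> * ct hs x i0
     - \<eta>^2 / 2 * (\<Sum>i\<in>I. qq hs i * (ct hs x i)^2)"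
    unfolding FF_def by (simp add: algebra_simps power2_eq_square)
  then show ?case using IH lnW step_ineq[OF lt, of x]
    by (simp add: distrib_left)
qed

lemma pathwise2: assumes "length hs \<le> T" "i0 \<in> I"
  shows "rsum (FF i0) hs \<le> ln (card I) / \<eta>"
proof -
  have "W hs i0 \<le> Ws hs" unfolding Ws_def
    using assms finI W_pos by (intro member_le_sum) (auto simp: less_imp_le)
  then have "ln (W hs i0) \<le> ln (Ws hs)" using W_pos[of hs i0] by (simp add: ln_le_cancel_iff Ws_pos)
  then have "\<eta> * rsum (FF i0) hs \<le> ln (card I)" using pathwise[OF assms] by linarith
  then show ?thesis using etapos by (simp add: field_simps)
qed

end

context ewfl begin

lemma sum_p_ind: "(\<Sum>x\<in>I. p hs x * (if i \<le> x then 1 else 0)) = Pge hs i"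
  unfolding Pge_def using finI by (simp add: sum.inter_filter[symmetric] if_distrib cong: if_cong)

lemma cond_ct: assumes "i \<in> I"
  shows "(\<Sum>x\<in>I. p hs x * ct hs x i) = ll i (Suc (length hs))"
proof -
  have "(\<Sum>x\<in>I. p hs x * ct hs x i) = (\<Sum>x\<in>I. p hs x * (if i \<le> x then 1 else 0) * (ll i (Suc (length hs)) / Pge hs i))"
    unfolding ct_def by (intro sum.cong) auto
  also have "\<dots> = (\<Sum>x\<in>I. p hs x * (if i \<le> x then 1 else 0)) * (ll i (Suc (length hs)) / Pge hs i)"
    by (rule sum_distrib_right[symmetric])
  finally show ?thesis using sum_p_ind Pge_pos[OF assms, of hs] by simp
qed

lemma cond_ct2: assumes "i \<in> I"
  shows "(\<Sum>x\<in>I. p hs x * (ct hs x i)^2) = (ll i (Suc (length hs)))^2 / Pge hs i"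
proof -
  have "(\<Sum>x\<in>I. p hs x * (ct hs x i)^2) = (\<Sum>x\<in>I. p hs x * (if i \<le> x then 1 else 0) * ((ll i (Suc (length hs)))^2 / (Pge hs i)^2))"
    unfolding ct_def by (intro sum.cong) (auto simp: power_divide power_mult_distrib)
  also have "\<dots> = (\<Sum>x\<in>I. p hs x * (if i \<le> x then 1 else 0)) * ((ll i (Suc (length hs)))^2 / (Pge hs i)^2)"
    by (rule sum_distrib_right[symmetric])
  finally show ?thesis using sum_p_ind Pge_pos[OF assms, of hs] by (simp add: power2_eq_square)
qed

lemma cond_FF: assumes "i0 \<in> I"
  shows "(\<Sum>x\<in>I. p hs x * FF i0 x hs) = (\<Sum>i\<in>I. qq hs i * ll i (Suc (length hs)))
     - ll i0 (Suc (length hs)) - \<eta> / 2 * (\<Sum>i\<in>I. qq hs i * (ll i (Suc (length hs)))^2 / Pge hs i)"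
proof -
  have e1: "(\<Sum>x\<in>I. p hs x * (\<Sum>i\<in>I. qq hs i * ct hs x i)) = (\<Sum>i\<in>I. qq hs i * ll i (Suc (length hs)))"
  proof -
    have "(\<Sum>x\<in>I. p hs x * (\<Sum>i\<in>I. qq hs i * ct hs x i)) = (\<Sum>x\<in>I. \<Sum>i\<in>I. qq hs i * (p hs x * ct hs x i))"
      by (simp add: sum_distrib_left mult.left_commute)
    also have "\<dots> = (\<Sum>i\<in>I. \<Sum>x\<in>I. qq hs i * (p hs x * ct hs x i))" by (rule sum.swap)
    also have "\<dots> = (\<Sum>i\<in>I. qq hs i * (\<Sum>x\<in>I. p hs x * ct hs x i))" by (simp add: sum_distrib_left)
    finally have "(\<Sum>x\<in>I. p hs x * (\<Sum>i\<in>I. qq hs i * ct hs x i)) = (\<Sum>i\<in>I. qq hs i * (\<Sum>x\<in>I. p hs x * ct hs x i))" .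
    then show ?thesis using cond_ct by simp
  qed
  have e2: "(\<Sum>x\<in>I. p hs x * (\<Sum>i\<in>I. qq hs i * (ct hs x i)^2)) = (\<Sum>i\<in>I. qq hs i * (ll i (Suc (length hs)))^2 / Pge hs i)"
  proof -
    have "(\<Sum>x\<in>I. p hs x * (\<Sum>i\<in>I. qq hs i * (ct hs x i)^2)) = (\<Sum>x\<in>I. \<Sum>i\<in>I. qq hs i * (p hs x * (ct hs x i)^2))"
      by (simp add: sum_distrib_left mult.left_commute)
    also have "\<dots> = (\<Sum>i\<in>I. \<Sum>x\<in>I. qq hs i * (p hs x * (ct hs x i)^2))" by (rule sum.swap)
    also have "\<dots> = (\<Sum>i\<in>I. qq hs i * (\<Sum>x\<in>I. p hs x * (ct hs x i)^2))" by (simp add: sum_distrib_left)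
    finally have "(\<Sum>x\<in>I. p hs x * (\<Sum>i\<in>I. qq hs i * (ct hs x i)^2)) = (\<Sum>i\<in>I. qq hs i * (\<Sum>x\<in>I. p hs x * (ct hs x i)^2))" .
    then show ?thesis using cond_ct2 by simp
  qed
  have e3: "(\<Sum>x\<in>I. p hs x * ct hs x i0) = ll i0 (Suc (length hs))" by (rule cond_ct[OF assms])
  have "(\<Sum>x\<in>I. p hs x * FF i0 x hs) = (\<Sum>x\<in>I. p hs x * (\<Sum>i\<in>I. qq hs i * ct hs x i))
     - (\<Sum>x\<in>I. p hs x * ct hs x i0) - \<eta> / 2 * (\<Sum>x\<in>I. p hs x * (\<Sum>i\<in>I. qq hs i * (ct hs x i)^2))"
  proof -
    have "(\<Sum>x\<in>I. p hs x * FF i0 x hs) = (\<Sum>x\<in>I. p hs x * (\<Sum>i\<in>I. qq hs i * ct hs x i)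
     - p hs x * ct hs x i0 - \<eta> / 2 * (p hs x * (\<Sum>i\<in>I. qq hs i * (ct hs x i)^2)))"
      unfolding FF_def by (intro sum.cong) (simp_all add: algebra_simps)
    then show ?thesis by (simp only: sum_subtractf sum_distrib_left[symmetric])
  qed
  then show ?thesis using e1 e2 e3 by simp
qed

lemma sum_p_Pge: "(\<Sum>i\<in>I. p hs i / Pge hs i) \<le> 1 + ln (card I / \<gamma>)"
proof -
  have "(\<Sum>i\<in>I. p hs i / Pge hs i) \<le> 1 + ln ((\<Sum>j\<in>I. p hs j) / p hs (Max I))"
    using tail_sum_bound[OF finI, of "p hs"] Ipos p_pos unfolding Pge_def by auto
  also have "(\<Sum>j\<in>I. p hs j) / p hs (Max I) = 1 / p hs (Max I)" by (simp add: sum_p)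
  also have "ln (1 / p hs (Max I)) \<le> ln (card I / \<gamma>)"
  proof -
    have "\<gamma> / card I \<le> p hs (Max I)" by (rule p_ge)
    then have "1 / p hs (Max I) \<le> card I / \<gamma>" using p_pos[of hs "Max I"] gpos Ipos
      by (simp add: field_simps)
    moreover have "card I / \<gamma> > 0" using gpos Ipos by simp
    ultimately show ?thesis using p_pos[of hs "Max I"] by (simp add: ln_le_cancel_iff)
  qed
  finally show ?thesis by simp
qed

lemma cond_FF_lower: assumes "i0 \<in> I" "length hs < T" "\<gamma> \<le> 1/2"
  shows "(\<Sum>x\<in>I. p hs x * FF i0 x hs) \<ge> (\<Sum>x\<in>I. p hs x * ll x (Suc (length hs)))
     - ll i0 (Suc (length hs)) - (2 * \<beta> * \<gamma> + 4 * \<eta> * \<beta>^2 * (1 + ln (card I / \<gamma>)))"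
proof -
  define t where "t = Suc (length hs)"
  have tT: "t \<in> {1..T}" using assms unfolding t_def by simp
  have a: "(\<Sum>x\<in>I. p hs x * ll x t) \<le> (\<Sum>i\<in>I. qq hs i * ll i t) + 2 * \<beta> * \<gamma>"
  proof -
    have nn: "(\<Sum>i\<in>I. qq hs i * ll i t) \<ge> 0"
      using ll_bounds(1)[OF _ tT] qq_nonneg by (intro sum_nonneg mult_nonneg_nonneg) auto
    have s2: "(\<Sum>i\<in>I. ll i t) \<le> card I * (2 * \<beta>)"
      using sum_bounded_above[of I "\<lambda>i. ll i t" "2*\<beta>"] ll_bounds(2)[OF _ tT] by auto
    have "(\<Sum>x\<in>I. p hs x * ll x t) = (1 - \<gamma>) * (\<Sum>i\<in>I. qq hs i * ll i t) + \<gamma> / card I * (\<Sum>i\<in>I. ll i t)"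
    proof -
      have "(\<Sum>x\<in>I. p hs x * ll x t) = (\<Sum>x\<in>I. (1 - \<gamma>) * (qq hs x * ll x t) + \<gamma> / card I * ll x t)"
        by (intro sum.cong) (simp_all add: p_eq algebra_simps)
      then show ?thesis by (simp add: sum.distrib sum_distrib_left)
    qed
    also have "\<dots> \<le> (\<Sum>i\<in>I. qq hs i * ll i t) + \<gamma> / card I * (card I * (2 * \<beta>))"
      using nn s2 gpos glt1 Ipos by (intro add_mono mult_left_mono) (auto simp: mult_left_le_one_le)
    also have "\<dots> = (\<Sum>i\<in>I. qq hs i * ll i t) + 2 * \<beta> * \<gamma>" using Ipos by simp
    finally show ?thesis .
  qed
  have b: "(\<Sum>i\<in>I. qq hs i * (ll i t)^2 / Pge hs i) \<le> 8 * \<beta>^2 * (1 + ln (card I / \<gamma>))"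
  proof -
    have "(\<Sum>i\<in>I. qq hs i * (ll i t)^2 / Pge hs i) \<le> (\<Sum>i\<in>I. 8 * \<beta>^2 * (p hs i / Pge hs i))"
    proof (intro sum_mono)
      fix i assume iI: "i \<in> I"
      have h1: "(1/2) * qq hs i \<le> (1 - \<gamma>) * qq hs i"
        using assms(3) qq_nonneg[of hs i] by (intro mult_right_mono) auto
      have h2: "\<gamma> / card I \<ge> 0" using gpos by simp
      have q2: "qq hs i \<le> 2 * p hs i" using p_eq[of hs i] h1 h2 by linarith
      have l2: "(ll i t)^2 \<le> (2*\<beta>)^2" using ll_bounds[OF iI tT] by (intro power_mono) auto
      have "qq hs i * (ll i t)^2 \<le> (2 * p hs i) * (2*\<beta>)^2"
        using q2 l2 qq_nonneg p_pos[of hs i] by (intro mult_mono) auto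
      then show "qq hs i * (ll i t)^2 / Pge hs i \<le> 8 * \<beta>^2 * (p hs i / Pge hs i)"
      proof -
        have "qq hs i * (ll i t)^2 \<le> 8 * \<beta>^2 * p hs i" using \<open>qq hs i * (ll i t)^2 \<le> (2 * p hs i) * (2*\<beta>)^2\<close>
          by (simp add: power_mult_distrib mult_ac)
        then have "qq hs i * (ll i t)^2 / Pge hs i \<le> 8 * \<beta>^2 * p hs i / Pge hs i"
          using Pge_pos[OF iI, of hs] by (intro divide_right_mono) auto
        then show ?thesis by simp
      qed
    qed
    also have "\<dots> = 8 * \<beta>^2 * (\<Sum>i\<in>I. p hs i / Pge hs i)" by (simp add: sum_distrib_left)
    also have "\<dots> \<le> 8 * \<beta>^2 * (1 + ln (card I / \<gamma>))"
      using sum_p_Pge by (intro mult_left_mono) auto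
    finally show ?thesis .
  qed
  have "\<eta> / 2 * (\<Sum>i\<in>I. qq hs i * (ll i t)^2 / Pge hs i) \<le> \<eta> / 2 * (8 * \<beta>^2 * (1 + ln (card I / \<gamma>)))"
    using b etapos by (intro mult_left_mono) auto
  also have "\<dots> = 4 * \<eta> * \<beta>^2 * (1 + ln (card I / \<gamma>))" by simp
  finally have c: "\<eta> / 2 * (\<Sum>i\<in>I. qq hs i * (ll i t)^2 / Pge hs i) \<le> 4 * \<eta> * \<beta>^2 * (1 + ln (card I / \<gamma>))" .
  have "(\<Sum>x\<in>I. p hs x * FF i0 x hs) = (\<Sum>i\<in>I. qq hs i * ll i t)
     - ll i0 t - \<eta> / 2 * (\<Sum>i\<in>I. qq hs i * (ll i t)^2 / Pge hs i)"
    using cond_FF[OF assms(1), of hs] unfolding t_def by simp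
  then show ?thesis using a c unfolding t_def[symmetric] by linarith
qed

end


lemma sum_shift1: "(\<Sum>t\<in>{1..n}. f t) = (\<Sum>m<n. f (Suc m) :: real)"
  by (induction n) (auto simp: atLeastAtMostSuc_conv add.commute)

context ewfl begin

definition LL where "LL x hs = ll x (Suc (length hs))"

lemma EE_rsum_FF_upper: assumes "i0 \<in> I"
  shows "EE T (rsum (FF i0)) \<le> ln (card I) / \<eta>"
proof -
  have "EE T (rsum (FF i0)) \<le> EE T (\<lambda>_. ln (card I) / \<eta>)"
    by (rule EE_mono) (use pathwise2 assms in \<open>auto simp: HH_def\<close>)
  then show ?thesis by (simp add: EE_const)
qed

lemma main_bound: assumes "i0 \<in> I" "\<gamma> \<le> 1/2"
  shows "EE T (rsum LL) - (\<Sum>m<T. ll i0 (Suc m))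
     \<le> ln (card I) / \<eta> + T * (2 * \<beta> * \<gamma> + 4 * \<eta> * \<beta>^2 * (1 + ln (card I / \<gamma>)))"
proof -
  define K where "K = 2 * \<beta> * \<gamma> + 4 * \<eta> * \<beta>^2 * (1 + ln (card I / \<gamma>))"
  have "EE T (rsum LL) - (\<Sum>m<T. ll i0 (Suc m)) - T * K
      = (\<Sum>m<T. EE m (\<lambda>hs. (\<Sum>x\<in>I. p hs x * LL x hs) - ll i0 (Suc (length hs)) - K))"
  proof -
    have "\<And>m. EE m (\<lambda>hs. (\<Sum>x\<in>I. p hs x * LL x hs) - ll i0 (Suc (length hs)) - K)
        = EE m (\<lambda>hs. \<Sum>x\<in>I. p hs x * LL x hs) - ll i0 (Suc m) - K"
    proof -
      fix m
      have "EE m (\<lambda>hs. (\<Sum>x\<in>I. p hs x * LL x hs) - ll i0 (Suc (length hs)) - K)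
          = EE m (\<lambda>hs. (\<Sum>x\<in>I. p hs x * LL x hs) - (ll i0 (Suc m) + K))"
        by (rule EE_cong) (auto simp: HH_def)
      also have "\<dots> = EE m (\<lambda>hs. \<Sum>x\<in>I. p hs x * LL x hs) - (ll i0 (Suc m) + K)"
        by (simp add: EE_diff EE_const)
      finally show "EE m (\<lambda>hs. (\<Sum>x\<in>I. p hs x * LL x hs) - ll i0 (Suc (length hs)) - K)
        = EE m (\<lambda>hs. \<Sum>x\<in>I. p hs x * LL x hs) - ll i0 (Suc m) - K" by simp
    qed
    then show ?thesis by (simp add: EE_rsum sum_subtractf)
  qed
  also have "\<dots> \<le> (\<Sum>m<T. EE m (\<lambda>hs. \<Sum>x\<in>I. p hs x * FF i0 x hs))"
  proof (intro sum_mono EE_mono)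
    fix m hs assume "m \<in> {..<T}" "hs \<in> HH m"
    then have "length hs < T" by (auto simp: HH_def)
    from cond_FF_lower[OF assms(1) this assms(2)]
    show "(\<Sum>x\<in>I. p hs x * LL x hs) - ll i0 (Suc (length hs)) - K \<le> (\<Sum>x\<in>I. p hs x * FF i0 x hs)"
      unfolding LL_def K_def by simp
  qed
  also have "\<dots> = EE T (rsum (FF i0))" by (simp add: EE_rsum)
  also have "\<dots> \<le> ln (card I) / \<eta>" by (rule EE_rsum_FF_upper[OF assms(1)])
  finally show ?thesis unfolding K_def by simp
qed

definition CC where "CC x hs = nv_cost h b x (d (Suc (length hs)))"

lemma rsum_CC: "rsum CC hs = (\<Sum>t\<in>{1..length hs}. nv_cost h b (rev hs ! (t - 1)) (d t))"
proof (induction hs)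
  case Nil
  then show ?case by simp
next
  case (Cons x hs)
  have "(\<Sum>t\<in>{1..length (x#hs)}. nv_cost h b (rev (x#hs) ! (t - 1)) (d t))
     = (\<Sum>t\<in>{1..length hs}. nv_cost h b (rev (x#hs) ! (t - 1)) (d t)) + nv_cost h b x (d (Suc (length hs)))"
    by (simp add: nth_append)
  also have "(\<Sum>t\<in>{1..length hs}. nv_cost h b (rev (x#hs) ! (t - 1)) (d t))
      = (\<Sum>t\<in>{1..length hs}. nv_cost h b (rev hs ! (t - 1)) (d t))"
    by (intro sum.cong) (auto simp: nth_append)
  finally show ?case using Cons by (simp add: CC_def)
qed

lemma rsum_LL: "rsum LL hs = rsum CC hs + (\<Sum>m<length hs. \<beta> - b * d (Suc m))"
  by (induction hs) (auto simp: LL_def CC_def ll_eq)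

lemma regret_eq: assumes "hs \<in> HH T" "i0 \<in> I"
  and "Min ((\<lambda>i. \<Sum>t\<in>{1..T}. nv_cost h b i (d t)) ` I) = (\<Sum>t\<in>{1..T}. nv_cost h b i0 (d t))"
  shows "regret I h b d T (rev hs) = rsum LL hs - (\<Sum>m<T. ll i0 (Suc m))"
proof -
  have len: "length hs = T" using assms by (auto simp: HH_def)
  have "(\<Sum>m<T. ll i0 (Suc m)) = (\<Sum>m<T. nv_cost h b i0 (d (Suc m))) + (\<Sum>m<T. \<beta> - b * d (Suc m))"
    by (simp add: ll_eq sum.distrib)
  moreover have "regret I h b d T (rev hs) = rsum CC hs - (\<Sum>t\<in>{1..T}. nv_cost h b i0 (d t))"
    unfolding regret_def assms(3) rsum_CC len by simp
  ultimately show ?thesis unfolding rsum_LL len sum_shift1 by simp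
qed

lemma regret_le: assumes "hs \<in> HH T"
  shows "regret I h b d T (rev hs) \<le> T * \<beta>"
proof -
  have len: "length hs = T" and sub: "set hs \<subseteq> I" using assms by (auto simp: HH_def)
  have "(\<Sum>t\<in>{1..T}. nv_cost h b (rev hs ! (t - 1)) (d t)) \<le> (\<Sum>t\<in>{1..T}. \<beta>)"
  proof (intro sum_mono)
    fix t assume t: "t \<in> {1..T}"
    then have "t - 1 < length (rev hs)" using len by auto
    then have "rev hs ! (t - 1) \<in> set hs" using nth_mem[of "t - 1" "rev hs"] by simp
    then have "rev hs ! (t - 1) \<le> D" using sub Isub by auto
    moreover have "d t \<le> D" using t dle by auto
    ultimately show "nv_cost h b (rev hs ! (t - 1)) (d t) \<le> \<beta>" by (rule nv_bounds)
  qed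
  moreover have "Min ((\<lambda>i. \<Sum>t\<in>{1..T}. nv_cost h b i (d t)) ` I) \<ge> 0"
  proof -
    have "\<forall>i\<in>I. (\<Sum>t\<in>{1..T}. nv_cost h b i (d t)) \<ge> 0"
      using nv_bounds(1) Isub dle by (auto intro!: sum_nonneg)
    then show ?thesis using finI Ipos by (subst Min_ge_iff) auto
  qed
  ultimately show ?thesis unfolding regret_def by simp
qed

lemma expected_eq: "ewf_expected_regret I D h b \<eta> \<gamma> d T = EE T (\<lambda>hs. regret I h b d T (rev hs))"
  unfolding ewf_expected_regret_def EE_def HH_def by simp

lemma trivial_bound: "ewf_expected_regret I D h b \<eta> \<gamma> d T \<le> T * \<beta>"
proof -
  have "EE T (\<lambda>hs. regret I h b d T (rev hs)) \<le> EE T (\<lambda>_. T * \<beta>)"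
    by (rule EE_mono) (rule regret_le)
  then show ?thesis by (simp add: expected_eq EE_const)
qed

lemma general_bound: assumes "\<gamma> \<le> 1/2"
  shows "ewf_expected_regret I D h b \<eta> \<gamma> d T
     \<le> ln (card I) / \<eta> + T * (2 * \<beta> * \<gamma> + 4 * \<eta> * \<beta>^2 * (1 + ln (card I / \<gamma>)))"
proof -
  define f where "f = (\<lambda>i. \<Sum>t\<in>{1..T}. nv_cost h b i (d t))"
  have "Min (f ` I) \<in> f ` I" using finI Ipos by (intro Min_in) auto
  then obtain i0 where i0: "i0 \<in> I" "Min (f ` I) = f i0" by auto
  have "EE T (\<lambda>hs. regret I h b d T (rev hs)) = EE T (\<lambda>hs. rsum LL hs - (\<Sum>m<T. ll i0 (Suc m)))"
    by (rule EE_cong) (rule regret_eq, use i0 f_def in auto)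
  also have "\<dots> = EE T (rsum LL) - (\<Sum>m<T. ll i0 (Suc m))" by (simp add: EE_diff EE_const)
  finally show ?thesis using main_bound[OF i0(1) assms] by (simp add: expected_eq)
qed

end


theorem theorem1:
  fixes T D :: nat and h b :: real and I :: "nat set" and d :: "nat \<Rightarrow> nat"
  assumes "T \<ge> 1" and "D \<ge> 1" and "h > 0" and "b > 0"
    and "I \<subseteq> {0..D}" and "card I \<ge> 2"
    and "\<forall>t\<in>{1..T}. d t \<le> D"
    and "2 * ewf_beta D h b * real T > 1"
  shows "ewf_expected_regret I D h b
           (sqrt (ln (real (card I)) /
              (4 * (ewf_beta D h b)\<^sup>2 * real T *
               ln (2 * ewf_beta D h b * real T * real (card I) ^ 3 + real (card I) + 2))))
           (1 / (2 * ewf_beta D h b * real T)) d T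
         \<le> 4 * ewf_beta D h b * sqrt (real T * ln (real (card I)) *
              ln (2 * ewf_beta D h b * real T * real (card I) ^ 3 + real (card I) + 2))
           + 2 * ewf_beta D h b * sqrt (real T * ln (real (card I))) + 1"
proof -
  define \<beta> where "\<beta> = ewf_beta D h b"
  define N where "N = real (card I)"
  define L where "L = ln (2 * \<beta> * real T * N ^ 3 + N + 2)"
  define K where "K = ln N"
  define \<eta> where "\<eta> = sqrt (K / (4 * \<beta>\<^sup>2 * real T * L))"
  define \<gamma> where "\<gamma> = 1 / (2 * \<beta> * real T)"
  have finI: "finite I" using assms(6) card.infinite by fastforce
  have betapos: "\<beta> > 0" unfolding \<beta>_def ewf_beta_def using assms by simp
  have Tpos: "real T > 0" using assms by simp
  have N2: "N \<ge> 2" unfolding N_def using assms by simp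
  have Kpos: "K > 0" unfolding K_def using N2 by simp
  have Lgt: "2 * \<beta> * real T * N ^ 3 + N + 2 > 1" using betapos Tpos N2 by (simp add: add_pos_nonneg)
  then have Lpos: "L > 0" unfolding L_def by simp
  have etapos: "\<eta> > 0" unfolding \<eta>_def using Kpos Lpos betapos Tpos by simp
  have gpos: "\<gamma> > 0" unfolding \<gamma>_def using betapos Tpos by simp
  have glt1: "\<gamma> < 1" unfolding \<gamma>_def using assms(8) betapos Tpos \<beta>_def by (simp add: divide_less_eq)
  interpret ewfl I D h b \<eta> \<gamma> d T
    by unfold_locales (use assms finI etapos gpos glt1 in auto)
  have RHSge: "4 * \<beta> * sqrt (real T * K * L) + 1 \<le> 4 * \<beta> * sqrt (real T * K * L) + 2 * \<beta> * sqrt (real T * K) + 1"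
    using betapos Kpos Tpos by simp
  show ?thesis
  proof (cases "\<beta> * real T < 1")
    case True
    have "ewf_expected_regret I D h b \<eta> \<gamma> d T \<le> T * \<beta>" using trivial_bound \<beta>_def by simp
    moreover have "0 \<le> 4 * \<beta> * sqrt (real T * K * L)" using betapos Kpos Lpos Tpos by simp
    ultimately show ?thesis using True RHSge
      unfolding \<eta>_def[symmetric] \<gamma>_def[symmetric] \<beta>_def[symmetric] N_def[symmetric] K_def[symmetric] L_def[symmetric]
      by (simp add: mult.commute)
  next
    case False
    have ghalf: "\<gamma> \<le> 1/2" unfolding \<gamma>_def using False betapos Tpos by (simp add: field_simps)
    have B: "ewf_expected_regret I D h b \<eta> \<gamma> d T
     \<le> K / \<eta> + T * (2 * \<beta> * \<gamma> + 4 * \<eta> * \<beta>^2 * (1 + ln (N / \<gamma>)))"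
      using general_bound[OF ghalf] unfolding \<beta>_def K_def N_def by simp
    have t1: "T * (2 * \<beta> * \<gamma>) = 1" unfolding \<gamma>_def using betapos Tpos by simp
    have NL: "1 + ln (N / \<gamma>) \<le> L"
    proof -
      have y: "N / \<gamma> = 2 * \<beta> * real T * N" unfolding \<gamma>_def by simp
      have ypos: "2 * \<beta> * real T * N > 0" using betapos Tpos N2 by simp
      have "1 + ln (N / \<gamma>) = ln (exp 1 * (2 * \<beta> * real T * N))" using ypos y betapos Tpos N2 by (simp add: ln_mult)
      also have "\<dots> \<le> L" unfolding L_def
      proof (subst ln_le_cancel_iff)
        show "0 < exp 1 * (2 * \<beta> * real T * N)" using ypos by simp
        show "0 < 2 * \<beta> * real T * N ^ 3 + N + 2" using Lgt by simp
        have "exp 1 \<le> N^2" using exp_le N2 power_mono[OF N2, of 2] by simp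
        then have "exp 1 * (2 * \<beta> * real T * N) \<le> N^2 * (2 * \<beta> * real T * N)"
          using ypos by (intro mult_right_mono) auto
        also have "\<dots> = 2 * \<beta> * real T * N ^ 3" by (simp add: power2_eq_square power3_eq_cube)
        finally show "exp 1 * (2 * \<beta> * real T * N) \<le> 2 * \<beta> * real T * N ^ 3 + N + 2"
          using N2 by simp
      qed
      finally show ?thesis .
    qed
    have t2: "T * (4 * \<eta> * \<beta>^2 * (1 + ln (N / \<gamma>))) \<le> 4 * \<beta>^2 * real T * L * \<eta>"
    proof -
      have "T * (4 * \<eta> * \<beta>^2 * (1 + ln (N / \<gamma>))) = (4 * \<eta> * \<beta>^2 * T) * (1 + ln (N / \<gamma>))" by simp
      also have "\<dots> \<le> (4 * \<eta> * \<beta>^2 * T) * L" using NL etapos betapos Tpos by (intro mult_left_mono) auto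
      finally show ?thesis by (simp add: mult_ac)
    qed
    define s where "s = sqrt K"
    define r where "r = sqrt (real T * L)"
    have spos: "s > 0" unfolding s_def using Kpos by simp
    have rpos: "r > 0" unfolding r_def using Tpos Lpos by simp
    have s2: "s^2 = K" unfolding s_def using Kpos by simp
    have r2: "r^2 = real T * L" unfolding r_def using Tpos Lpos by simp
    have eta_eq: "\<eta> = s / (2 * \<beta> * r)"
    proof -
      have "4 * \<beta>\<^sup>2 * real T * L = (2 * \<beta> * r)^2" using r2 by (simp add: power_mult_distrib)
      then have "\<eta> = sqrt (s^2 / (2 * \<beta> * r)^2)" unfolding \<eta>_def s2 by simp
      also have "\<dots> = s / (2 * \<beta> * r)" using spos rpos betapos by (simp add: real_sqrt_divide)
      finally show ?thesis .
    qed
    have sq: "sqrt (real T * K * L) = s * r" unfolding s_def r_def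
      by (simp add: real_sqrt_mult[symmetric] mult_ac)
    have e1: "K / \<eta> = 2 * \<beta> * s * r" unfolding eta_eq s2[symmetric] using spos rpos betapos by (simp add: field_simps power2_eq_square)
    have e2: "4 * \<beta>^2 * real T * L * \<eta> = 2 * \<beta> * s * r" unfolding eta_eq mult.assoc[of _ "real T" L] r2[symmetric] using spos rpos betapos
      by (simp add: field_simps power2_eq_square)
    have "ewf_expected_regret I D h b \<eta> \<gamma> d T \<le> 4 * \<beta> * sqrt (real T * K * L) + 1"
      using B t1 t2 e1 e2 sq by (simp add: distrib_left)
    then show ?thesis using RHSge
      unfolding \<eta>_def[symmetric] \<gamma>_def[symmetric] \<beta>_def[symmetric] N_def[symmetric] K_def[symmetric] L_def[symmetric]
      by linarith
  qed
qed


end
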